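(* Let $L,k,n$ be positive integers with $2k<n$ and $q$ a prime power. Every $[n,k,L]_q$-AAD family $\mathcal F$ satisfies $|\mathcal F|\le 1+L\frac{q^{n-k}-1}{q^k-1}$. Consequently, for fixed $n,k,L$, $p^{AAD}(n,k,L)\le n-2k$.
   Context: An $[n,k,L]_q$-almost affinely disjoint (AAD) family is a family $\mathcal F$ of $k$-dimensional linear subspaces of $\mathbb F_q^n$ ($n>2k$) such that (1) any two distinct members intersect only in $\{0\}$, and (2) for every $S\in\mathcal F$ and every $\boldsymbol u\in\mathbb F_q^n\setminus S$, the affine subspace $\boldsymbol u+S$ has nonempty intersection with at most $L$ members of $\mathcal F$. $m^{AAD}_q(n,k,L)$ is the maximum size of such a family and $p^{AAD}(n,k,L)=\limsup_{q\to\infty}\log_q m^{AAD}_q(n,k,L)$, the limsup over prime powers $q$. *)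

theory Defs
  imports "HOL-Algebra.Ring" "HOL-Algebra.Ring" "HOL-Number_Theory.Prime_Powers"
    "HOL-Library.Liminf_Limsup" "HOL-Library.Extended_Real" "HOL-Library.FuncSet"
begin

definition vspace :: "('a, 'b) ring_scheme \<Rightarrow> nat \<Rightarrow> (nat \<Rightarrow> 'a) set" where
  "vspace R n = {0..<n} \<rightarrow>\<^sub>E carrier R"

definition vzero :: "('a, 'b) ring_scheme \<Rightarrow> nat \<Rightarrow> nat \<Rightarrow> 'a" where
  "vzero R n = (\<lambda>i\<in>{0..<n}. \<zero>\<^bsub>R\<^esub>)"

definition vadd :: "('a, 'b) ring_scheme \<Rightarrow> nat \<Rightarrow> (nat \<Rightarrow> 'a) \<Rightarrow> (nat \<Rightarrow> 'a) \<Rightarrow> nat \<Rightarrow> 'a" where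
  "vadd R n v w = (\<lambda>i\<in>{0..<n}. v i \<oplus>\<^bsub>R\<^esub> w i)"

definition vsmult :: "('a, 'b) ring_scheme \<Rightarrow> nat \<Rightarrow> 'a \<Rightarrow> (nat \<Rightarrow> 'a) \<Rightarrow> nat \<Rightarrow> 'a" where
  "vsmult R n a v = (\<lambda>i\<in>{0..<n}. a \<otimes>\<^bsub>R\<^esub> v i)"

fun lincomb :: "('a, 'b) ring_scheme \<Rightarrow> nat \<Rightarrow> 'a list \<Rightarrow> (nat \<Rightarrow> 'a) list \<Rightarrow> nat \<Rightarrow> 'a" where
  "lincomb R n (c # cs) (v # vs) = vadd R n (vsmult R n c v) (lincomb R n cs vs)"
| "lincomb R n _ _ = vzero R n"

definition vspan :: "('a, 'b) ring_scheme \<Rightarrow> nat \<Rightarrow> (nat \<Rightarrow> 'a) list \<Rightarrow> (nat \<Rightarrow> 'a) set" where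
  "vspan R n vs = {lincomb R n cs vs | cs. length cs = length vs \<and> set cs \<subseteq> carrier R}"

definition lin_indep :: "('a, 'b) ring_scheme \<Rightarrow> nat \<Rightarrow> (nat \<Rightarrow> 'a) list \<Rightarrow> bool" where
  "lin_indep R n vs \<longleftrightarrow> set vs \<subseteq> vspace R n \<and>
     (\<forall>cs. length cs = length vs \<and> set cs \<subseteq> carrier R \<and> lincomb R n cs vs = vzero R n
        \<longrightarrow> set cs \<subseteq> {\<zero>\<^bsub>R\<^esub>})"

definition is_subspace_dim :: "('a, 'b) ring_scheme \<Rightarrow> nat \<Rightarrow> nat \<Rightarrow> (nat \<Rightarrow> 'a) set \<Rightarrow> bool" where
  "is_subspace_dim R n k S \<longleftrightarrow> (\<exists>vs. length vs = k \<and> lin_indep R n vs \<and> S = vspan R n vs)"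

definition AAD :: "('a, 'b) ring_scheme \<Rightarrow> nat \<Rightarrow> nat \<Rightarrow> nat \<Rightarrow> (nat \<Rightarrow> 'a) set set \<Rightarrow> bool" where
  "AAD R n k L \<F> \<longleftrightarrow> 2 * k < n \<and>
     (\<forall>S\<in>\<F>. is_subspace_dim R n k S) \<and>
     (\<forall>S\<in>\<F>. \<forall>T\<in>\<F>. S \<noteq> T \<longrightarrow> S \<inter> T = {vzero R n}) \<and>
     (\<forall>S\<in>\<F>. \<forall>u\<in>vspace R n - S.
        card {T\<in>\<F>. (vadd R n u ` S) \<inter> T \<noteq> {}} \<le> L)"

text \<open>m_q(n,k,L): maximum size of an AAD family over the field with q elements.  Every finite
  field of order q is isomorphic to a field structure on {0..<q}, so we range over those.\<close>
definition mAAD :: "nat \<Rightarrow> nat \<Rightarrow> nat \<Rightarrow> nat \<Rightarrow> nat" where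
  "mAAD q n k L = Sup {c. \<exists>(K :: nat ring) \<F>. field K \<and> carrier K = {0..<q} \<and> AAD K n k L \<F> \<and> c = card \<F>}"

definition pAAD :: "nat \<Rightarrow> nat \<Rightarrow> nat \<Rightarrow> ereal" where
  "pAAD n k L = Limsup (inf sequentially (principal {q. primepow q}))
      (\<lambda>q. ereal (log (real q) (real (mAAD q n k L))))"

end

theory Submission
  imports Defs "HOL-Real_Asymp.Real_Asymp"
begin

context cring begin

lemma vspace_mem: "v \<in> vspace R n \<Longrightarrow> i < n \<Longrightarrow> v i \<in> carrier R"
  unfolding vspace_def by auto

lemma vspace_ext: "v \<in> vspace R n \<Longrightarrow> \<not> i < n \<Longrightarrow> v i = undefined"
  unfolding vspace_def by auto

lemma vspace_eqI: "v \<in> vspace R n \<Longrightarrow> w \<in> vspace R n \<Longrightarrow> (\<And>i. i < n \<Longrightarrow> v i = w i) \<Longrightarrow> v = w"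
  by (rule ext) (metis vspace_ext)

lemma vzero_in: "vzero R n \<in> vspace R n"
  unfolding vzero_def vspace_def by auto

lemma vadd_in: "v \<in> vspace R n \<Longrightarrow> w \<in> vspace R n \<Longrightarrow> vadd R n v w \<in> vspace R n"
  unfolding vadd_def vspace_def by auto

lemma vsmult_in: "a \<in> carrier R \<Longrightarrow> v \<in> vspace R n \<Longrightarrow> vsmult R n a v \<in> vspace R n"
  unfolding vsmult_def vspace_def by auto

lemma lincomb_in: "set cs \<subseteq> carrier R \<Longrightarrow> set vs \<subseteq> vspace R n \<Longrightarrow> lincomb R n cs vs \<in> vspace R n"
proof (induction vs arbitrary: cs)
  case Nil then show ?case by (cases cs) (auto intro!: vzero_in)
next
  case (Cons v vs) then show ?case by (cases cs) (auto intro!: vadd_in vsmult_in vzero_in)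
qed

lemma lincomb_add:
  "length cs = length vs \<Longrightarrow> length ds = length vs \<Longrightarrow> set cs \<subseteq> carrier R \<Longrightarrow> set ds \<subseteq> carrier R
   \<Longrightarrow> set vs \<subseteq> vspace R n \<Longrightarrow>
   lincomb R n (map2 (\<oplus>) cs ds) vs = vadd R n (lincomb R n cs vs) (lincomb R n ds vs)"
proof (induction vs arbitrary: cs ds)
  case Nil
  then show ?case by (auto simp: vadd_def vzero_def)
next
  case (Cons v vs)
  then obtain c cs' d ds' where cs: "cs = c # cs'" and ds: "ds = d # ds'"
    by (metis length_Suc_conv)
  have IH: "lincomb R n (map2 (\<oplus>) cs' ds') vs = vadd R n (lincomb R n cs' vs) (lincomb R n ds' vs)"
    using Cons by (auto simp: cs ds)
  have X: "lincomb R n cs' vs \<in> vspace R n" "lincomb R n ds' vs \<in> vspace R n"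
    using Cons by (auto simp: cs ds intro!: lincomb_in)
  have cd: "c \<in> carrier R" "d \<in> carrier R" "v \<in> vspace R n" using Cons by (auto simp: cs ds)
  show ?case
  proof -
    have "\<And>i. i < n \<Longrightarrow> (c \<oplus> d) \<otimes> v i \<oplus> (lincomb R n cs' vs i \<oplus> lincomb R n ds' vs i)
       = (c \<otimes> v i \<oplus> lincomb R n cs' vs i) \<oplus> (d \<otimes> v i \<oplus> lincomb R n ds' vs i)"
    proof -
      fix i assume i: "i < n"
      have "v i \<in> carrier R" "lincomb R n cs' vs i \<in> carrier R" "lincomb R n ds' vs i \<in> carrier R"
        using X cd i vspace_mem by auto
      then show "?thesis i" using cd by (simp add: l_distr a_ac)
    qed
    then show ?thesis by (auto simp: cs ds IH vadd_def vsmult_def)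
  qed
qed

lemma lincomb_smult:
  "a \<in> carrier R \<Longrightarrow> length cs = length vs \<Longrightarrow> set cs \<subseteq> carrier R
   \<Longrightarrow> set vs \<subseteq> vspace R n \<Longrightarrow>
   lincomb R n (map ((\<otimes>) a) cs) vs = vsmult R n a (lincomb R n cs vs)"
proof (induction vs arbitrary: cs)
  case Nil
  then show ?case by (auto simp: vsmult_def vzero_def)
next
  case (Cons v vs)
  then obtain c cs' where cs: "cs = c # cs'"
    by (metis length_Suc_conv)
  have IH: "lincomb R n (map ((\<otimes>) a) cs') vs = vsmult R n a (lincomb R n cs' vs)"
    using Cons by (auto simp: cs)
  have X: "lincomb R n cs' vs \<in> vspace R n"
    using Cons by (auto simp: cs intro!: lincomb_in)
  have cd: "c \<in> carrier R" "v \<in> vspace R n" using Cons by (auto simp: cs)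
  show ?case
  proof -
    have "\<And>i. i < n \<Longrightarrow> (a \<otimes> c) \<otimes> v i \<oplus> a \<otimes> lincomb R n cs' vs i
       = a \<otimes> (c \<otimes> v i \<oplus> lincomb R n cs' vs i)"
    proof -
      fix i assume i: "i < n"
      have "v i \<in> carrier R" "lincomb R n cs' vs i \<in> carrier R"
        using X cd i vspace_mem by auto
      then show "?thesis i" using cd Cons(2) by (simp add: r_distr m_assoc)
    qed
    then show ?thesis by (auto simp: cs IH vadd_def vsmult_def)
  qed
qed

lemma lincomb_zero: "set vs \<subseteq> vspace R n \<Longrightarrow> lincomb R n (replicate (length vs) \<zero>) vs = vzero R n"
  by (induction vs) (auto simp: vadd_def vsmult_def vzero_def vspace_mem)


lemma vadd_neg: "v \<in> vspace R n \<Longrightarrow> vadd R n v (vsmult R n (\<ominus> \<one>) v) = vzero R n"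
  by (auto simp: vadd_def vsmult_def vzero_def vspace_mem l_minus r_neg)

lemma vadd_zero: "v \<in> vspace R n \<Longrightarrow> vadd R n v (vzero R n) = v"
  by (rule vspace_eqI[OF vadd_in[OF _ vzero_in]]) (auto simp: vadd_def vzero_def vspace_mem)

lemma vadd_cancel: "v \<in> vspace R n \<Longrightarrow> w \<in> vspace R n \<Longrightarrow> vadd R n (vadd R n v w) (vsmult R n (\<ominus> \<one>) w) = v"
  by (rule vspace_eqI[OF vadd_in[OF vadd_in vsmult_in]]) (auto simp: vadd_def vsmult_def vspace_mem l_minus a_assoc r_neg)

lemma vadd_inj_aux:
  assumes "t1 \<in> vspace R n" "t2 \<in> vspace R n" "s1 \<in> vspace R n" "s2 \<in> vspace R n"
    and "vadd R n t1 s1 = vadd R n t2 s2"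
  shows "vadd R n t1 (vsmult R n (\<ominus> \<one>) t2) = vadd R n s2 (vsmult R n (\<ominus> \<one>) s1)"
proof (rule vspace_eqI)
  fix i assume i: "i < n"
  have c: "t1 i \<in> carrier R" "t2 i \<in> carrier R" "s1 i \<in> carrier R" "s2 i \<in> carrier R"
    using assms i vspace_mem by auto
  have h: "t1 i \<oplus> s1 i = t2 i \<oplus> s2 i" using fun_cong[OF assms(5), of i] i by (simp add: vadd_def)
  have "t1 i \<oplus> \<ominus> t2 i = (t1 i \<oplus> s1 i) \<oplus> (\<ominus> s1 i \<oplus> \<ominus> t2 i)"
    using c by (simp add: a_assoc r_neg2)
  also have "\<dots> = (t2 i \<oplus> s2 i) \<oplus> (\<ominus> s1 i \<oplus> \<ominus> t2 i)" by (simp add: h)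
  also have "\<dots> = s2 i \<oplus> \<ominus> s1 i"
  proof -
    have "(t2 i \<oplus> s2 i) \<oplus> (\<ominus> s1 i \<oplus> \<ominus> t2 i) = t2 i \<oplus> (\<ominus> t2 i \<oplus> (s2 i \<oplus> \<ominus> s1 i))"
      using c by (simp add: a_ac)
    then show ?thesis using c by (simp add: r_neg2)
  qed
  finally show "vadd R n t1 (vsmult R n (\<ominus> \<one>) t2) i = vadd R n s2 (vsmult R n (\<ominus> \<one>) s1) i"
    using i c by (simp add: vadd_def vsmult_def l_minus)
qed (use assms in \<open>auto intro!: vadd_in vsmult_in\<close>)


lemma map2_add_carrier: "set cs \<subseteq> carrier R \<Longrightarrow> set ds \<subseteq> carrier R \<Longrightarrow> set (map2 (\<oplus>) cs ds) \<subseteq> carrier R"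
proof (induction cs arbitrary: ds)
  case (Cons c cs) then show ?case by (cases ds) auto
qed simp

lemma vspan_sub: "set vs \<subseteq> vspace R n \<Longrightarrow> vspan R n vs \<subseteq> vspace R n"
  unfolding vspan_def using lincomb_in by auto

lemma vspan_zero: "set vs \<subseteq> vspace R n \<Longrightarrow> vzero R n \<in> vspan R n vs"
  unfolding vspan_def using lincomb_zero[of vs]
  by (auto intro!: exI[of _ "replicate (length vs) \<zero>"])

lemma vspan_add: "set vs \<subseteq> vspace R n \<Longrightarrow> x \<in> vspan R n vs \<Longrightarrow> y \<in> vspan R n vs
   \<Longrightarrow> vadd R n x y \<in> vspan R n vs"
  unfolding vspan_def
proof clarify
  fix cs ds assume *: "set vs \<subseteq> vspace R n" "length cs = length vs" "set cs \<subseteq> carrier R"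
     "length ds = length vs" "set ds \<subseteq> carrier R"
  show "\<exists>es. vadd R n (lincomb R n cs vs) (lincomb R n ds vs) = lincomb R n es vs \<and>
              length es = length vs \<and> set es \<subseteq> carrier R"
    using * map2_add_carrier[of cs ds] by (intro exI[of _ "map2 (\<oplus>) cs ds"])
      (simp add: lincomb_add)
qed

lemma vspan_smult: "set vs \<subseteq> vspace R n \<Longrightarrow> a \<in> carrier R \<Longrightarrow> x \<in> vspan R n vs
   \<Longrightarrow> vsmult R n a x \<in> vspan R n vs"
  unfolding vspan_def
proof clarify
  fix cs assume *: "set vs \<subseteq> vspace R n" "length cs = length vs" "set cs \<subseteq> carrier R"
     "a \<in> carrier R"
  show "\<exists>es. vsmult R n a (lincomb R n cs vs) = lincomb R n es vs \<and>
              length es = length vs \<and> set es \<subseteq> carrier R"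
    using * by (intro exI[of _ "map ((\<otimes>) a) cs"]) (auto simp: lincomb_smult)
qed

lemma card_vspan:
  assumes li: "lin_indep R n vs" and fin: "finite (carrier R)"
  shows "card (vspan R n vs) = card (carrier R) ^ length vs"
proof -
  let ?C = "{cs. set cs \<subseteq> carrier R \<and> length cs = length vs}"
  have vs: "set vs \<subseteq> vspace R n" using li unfolding lin_indep_def by auto
  have eq: "vspan R n vs = (\<lambda>cs. lincomb R n cs vs) ` ?C"
    unfolding vspan_def by auto
  have inj: "inj_on (\<lambda>cs. lincomb R n cs vs) ?C"
  proof (rule inj_onI)
    fix cs ds assume cs: "cs \<in> ?C" and ds: "ds \<in> ?C" and e: "lincomb R n cs vs = lincomb R n ds vs"
    let ?es = "map2 (\<oplus>) cs (map ((\<otimes>) (\<ominus> \<one>)) ds)"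
    have ds': "set (map ((\<otimes>) (\<ominus> \<one>)) ds) \<subseteq> carrier R" using ds by auto
    have "lincomb R n ?es vs = vadd R n (lincomb R n cs vs) (lincomb R n (map ((\<otimes>) (\<ominus> \<one>)) ds) vs)"
      using cs ds ds' vs by (intro lincomb_add) auto
    also have "\<dots> = vzero R n"
      using cs ds vs e by (simp add: lincomb_smult vadd_neg lincomb_in)
    finally have z: "lincomb R n ?es vs = vzero R n" .
    have es: "length ?es = length vs" "set ?es \<subseteq> carrier R"
      using cs ds ds' map2_add_carrier[OF _ ds'] by auto
    have "set ?es \<subseteq> {\<zero>}" using li z es unfolding lin_indep_def by blast
    show "cs = ds"
    proof (rule nth_equalityI)
      show "length cs = length ds" using cs ds by simp
      fix i assume i: "i < length cs"
      have ci: "cs ! i \<in> carrier R" "ds ! i \<in> carrier R" using cs ds i by auto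
      have "?es ! i \<in> set ?es" using i cs ds by (intro nth_mem) simp
      then have "?es ! i = \<zero>" using \<open>set ?es \<subseteq> {\<zero>}\<close> by auto
      then have "cs ! i \<oplus> \<ominus> (ds ! i) = \<zero>" using i cs ds ci by (simp add: l_minus)
      then have "\<ominus> (\<ominus> (ds ! i)) = cs ! i" using ci by (intro minus_equality) auto
      then show "cs ! i = ds ! i" using ci by simp
    qed
  qed
  have "card (vspan R n vs) = card ?C" unfolding eq using inj by (rule card_image)
  also have "\<dots> = card (carrier R) ^ length vs" by (rule card_lists_length_eq[OF fin])
  finally show ?thesis .
qed

lemma card_vspace: "finite (carrier R) \<Longrightarrow> card (vspace R n) = card (carrier R) ^ n"
  unfolding vspace_def by (simp add: card_PiE)

lemma finite_vspace: "finite (carrier R) \<Longrightarrow> finite (vspace R n)"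
  unfolding vspace_def by (simp add: finite_PiE)


lemma vsub_zero:
  assumes "v \<in> vspace R n" "w \<in> vspace R n" "vadd R n v (vsmult R n (\<ominus> \<one>) w) = vzero R n"
  shows "v = w"
proof (rule vspace_eqI[OF assms(1,2)])
  fix i assume i: "i < n"
  have c: "v i \<in> carrier R" "w i \<in> carrier R" using assms i vspace_mem by auto
  have "v i \<oplus> \<ominus> w i = \<zero>" using fun_cong[OF assms(3), of i] i c
    by (simp add: vadd_def vsmult_def vzero_def l_minus)
  then have "\<ominus> (\<ominus> (w i)) = v i" using c by (intro minus_equality) auto
  then show "v i = w i" using c by simp
qed

lemma subspace_props:
  assumes "is_subspace_dim R n k T" "finite (carrier R)"
  shows "T \<subseteq> vspace R n" "vzero R n \<in> T"
    "\<And>x y. x \<in> T \<Longrightarrow> y \<in> T \<Longrightarrow> vadd R n x y \<in> T"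
    "\<And>x. x \<in> T \<Longrightarrow> vsmult R n (\<ominus> \<one>) x \<in> T"
    "card T = card (carrier R) ^ k"
proof -
  obtain vs where vs: "length vs = k" "lin_indep R n vs" "T = vspan R n vs"
    using assms unfolding is_subspace_dim_def by auto
  have sv: "set vs \<subseteq> vspace R n" using vs unfolding lin_indep_def by auto
  show "T \<subseteq> vspace R n" "vzero R n \<in> T"
    "\<And>x y. x \<in> T \<Longrightarrow> y \<in> T \<Longrightarrow> vadd R n x y \<in> T"
    "\<And>x. x \<in> T \<Longrightarrow> vsmult R n (\<ominus> \<one>) x \<in> T"
    using vs sv vspan_sub vspan_zero vspan_add vspan_smult[where a="\<ominus> \<one>"] by auto
  show "card T = card (carrier R) ^ k" using vs card_vspan assms(2) by simp
qed

lemma main_count: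
  assumes aad: "AAD R n k L F" and fin: "finite (carrier R)" and S: "S \<in> F"
  shows "(card F - 1) * ((card (carrier R) ^ k - 1) * card (carrier R) ^ k)
         \<le> L * (card (carrier R) ^ n - card (carrier R) ^ k)"
proof -
  define q where "q = card (carrier R)"
  define V where "V = vspace R n"
  define A where "A T = {u \<in> V - S. vadd R n u ` S \<inter> T \<noteq> {}}" for T
  have sub: "\<And>T. T \<in> F \<Longrightarrow> is_subspace_dim R n k T" using aad unfolding AAD_def by auto
  note sp = subspace_props[OF sub fin]
  have disj: "\<And>T. T \<in> F \<Longrightarrow> T \<noteq> S \<Longrightarrow> S \<inter> T = {vzero R n}"
    using aad S unfolding AAD_def by auto
  have Lb: "\<And>u. u \<in> V - S \<Longrightarrow> card {T\<in>F. (vadd R n u ` S) \<inter> T \<noteq> {}} \<le> L"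
    using aad S unfolding AAD_def V_def by auto
  have finV: "finite V" unfolding V_def using finite_vspace[OF fin] .
  have finF: "finite F"
  proof (rule finite_subset[of F "Pow V"])
    show "F \<subseteq> Pow V" using sp(1) unfolding V_def by auto
  qed (use finV in auto)
  have SV: "S \<subseteq> V" using sp(1)[OF S] unfolding V_def .
  have cardS: "card S = q ^ k" using sp(5)[OF S] unfolding q_def .
  have cardVS: "card (V - S) = q ^ n - q ^ k"
    using card_Diff_subset[OF finite_subset[OF SV finV] SV] cardS card_vspace[OF fin]
    unfolding V_def q_def by simp
  have "(\<Sum>u\<in>V - S. card {T\<in>F. (vadd R n u ` S) \<inter> T \<noteq> {}}) \<le> card (V - S) * L"
    using sum_bounded_above[of "V - S" _ L] Lb by auto
  also have "(\<Sum>u\<in>V - S. card {T\<in>F. (vadd R n u ` S) \<inter> T \<noteq> {}})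
      = (\<Sum>u\<in>V - S. \<Sum>T\<in>F. if (vadd R n u ` S) \<inter> T \<noteq> {} then 1 else 0)"
    using finF by (intro sum.cong refl) (simp add: sum.inter_filter[symmetric])
  also have "\<dots> = (\<Sum>T\<in>F. \<Sum>u\<in>V - S. if (vadd R n u ` S) \<inter> T \<noteq> {} then 1 else 0)"
    by (rule sum.swap)
  also have "\<dots> = (\<Sum>T\<in>F. card (A T))"
    using finV by (intro sum.cong refl) (simp add: sum.inter_filter[symmetric] A_def)
  finally have up: "(\<Sum>T\<in>F. card (A T)) \<le> card (V - S) * L" .
  have low: "(q ^ k - 1) * q ^ k \<le> card (A T)" if T: "T \<in> F - {S}" for T
  proof -
    have TF: "T \<in> F" and TS: "T \<noteq> S" using T by auto
    have TV: "T \<subseteq> V" using sp(1)[OF TF] unfolding V_def .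
    have ST: "S \<inter> T = {vzero R n}" using disj TF TS .
    let ?f = "\<lambda>(t, s). vadd R n t s"
    let ?D = "(T - {vzero R n}) \<times> S"
    have inj: "inj_on ?f ?D"
    proof (rule inj_onI)
      fix x y assume xD: "x \<in> ?D" and yD: "y \<in> ?D" and exy: "?f x = ?f y"
      obtain t1 s1 where x: "x = (t1, s1)" by (cases x)
      obtain t2 s2 where y: "y = (t2, s2)" by (cases y)
      have t1: "t1 \<in> T" "t1 \<noteq> vzero R n" and s1: "s1 \<in> S"
        and t2: "t2 \<in> T" "t2 \<noteq> vzero R n" and s2: "s2 \<in> S"
        and e: "vadd R n t1 s1 = vadd R n t2 s2" using xD yD exy x y by auto
      have inV: "t1 \<in> V" "t2 \<in> V" "s1 \<in> V" "s2 \<in> V" using t1 t2 s1 s2 TV SV by auto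
      have d: "vadd R n t1 (vsmult R n (\<ominus> \<one>) t2) = vadd R n s2 (vsmult R n (\<ominus> \<one>) s1)"
        using vadd_inj_aux[OF _ _ _ _ e] inV unfolding V_def by auto
      have "vadd R n t1 (vsmult R n (\<ominus> \<one>) t2) \<in> T" using sp(3,4)[OF TF] t1 t2 by auto
      moreover have "vadd R n s2 (vsmult R n (\<ominus> \<one>) s1) \<in> S" using sp(3,4)[OF S] s1 s2 by auto
      ultimately have "vadd R n t1 (vsmult R n (\<ominus> \<one>) t2) = vzero R n"
        using ST d by auto
      then have "t1 = t2" using vsub_zero inV unfolding V_def by auto
      moreover have "s2 = s1" using vsub_zero inV d \<open>vadd R n t1 (vsmult R n (\<ominus> \<one>) t2) = vzero R n\<close>
        unfolding V_def by auto
      ultimately show "x = y" using x y by auto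
    qed
    have img: "?f ` ?D \<subseteq> A T"
    proof (rule subsetI)
      fix z assume "z \<in> ?f ` ?D"
      then obtain t s where t: "t \<in> T" "t \<noteq> vzero R n" and s: "s \<in> S" and z: "z = vadd R n t s"
        by auto
      have inV: "t \<in> V" "s \<in> V" using t s TV SV by auto
      have uV: "vadd R n t s \<in> V" using vadd_in inV unfolding V_def by auto
      have canc: "vadd R n (vadd R n t s) (vsmult R n (\<ominus> \<one>) s) = t"
        using vadd_cancel inV unfolding V_def by auto
      have ns: "vsmult R n (\<ominus> \<one>) s \<in> S" using sp(4)[OF S] s by auto
      have "vadd R n t s \<notin> S"
      proof
        assume "vadd R n t s \<in> S"
        then have "t \<in> S" using sp(3)[OF S] ns canc by metis
        then show False using ST t by auto
      qed
      moreover have "t \<in> vadd R n (vadd R n t s) ` S \<inter> T"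
        using canc ns t by (metis IntI image_eqI)
      ultimately show "z \<in> A T" using uV z unfolding A_def by auto
    qed
    have finA: "finite (A T)" unfolding A_def using finV by auto
    have cD: "card ?D = (q ^ k - 1) * q ^ k"
      using sp(2,5)[OF TF] cardS finite_subset[OF TV finV] unfolding q_def
      by (simp add: card_cartesian_product)
    show ?thesis using card_mono[OF finA img] card_image[OF inj] cD by simp
  qed
  have "(card F - 1) * ((q ^ k - 1) * q ^ k) = (\<Sum>T\<in>F - {S}. (q ^ k - 1) * q ^ k)"
    using finF S by simp
  also have "\<dots> \<le> (\<Sum>T\<in>F - {S}. card (A T))" using low by (intro sum_mono) auto
  also have "\<dots> \<le> (\<Sum>T\<in>F. card (A T))" using finF by (intro sum_mono2) auto
  also have "\<dots> \<le> L * (q ^ n - q ^ k)" using up cardVS by (simp add: mult.commute)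
  finally show ?thesis unfolding q_def .
qed

end

lemma field_card_ge2: "field R \<Longrightarrow> finite (carrier R) \<Longrightarrow> 2 \<le> card (carrier R)"
proof -
  assume f: "field R" and fin: "finite (carrier R)"
  interpret field R by fact
  have "{\<zero>\<^bsub>R\<^esub>, \<one>\<^bsub>R\<^esub>} \<subseteq> carrier R" by auto
  then have "card {\<zero>\<^bsub>R\<^esub>, \<one>\<^bsub>R\<^esub>} \<le> card (carrier R)" using fin by (rule card_mono[rotated])
  then show ?thesis by simp
qed

lemma bound1:
  assumes f: "field R" and fin: "finite (carrier R)" and aad: "AAD R n k L F"
    and k: "0 < k" and nk: "2 * k < n"
  shows "real (card F) \<le> 1 + real L * (real (card (carrier R)) ^ (n - k) - 1)
                                          / (real (card (carrier R)) ^ k - 1)"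
proof -
  interpret field R by fact
  define q where "q = card (carrier R)"
  have q2: "2 \<le> q" unfolding q_def using field_card_ge2 f fin .
  have nqk: "2 \<le> q ^ k" using power_increasing[of 1 k q] q2 k by simp
  have qk: "(2::real) \<le> real q ^ k"
    using nqk by (metis of_nat_le_iff of_nat_numeral of_nat_power)
  have qnk: "(1::real) \<le> real q ^ (n - k)" using q2 by simp
  have nonneg: "0 \<le> real L * (real q ^ (n - k) - 1) / (real q ^ k - 1)"
    using qk qnk by simp
  show ?thesis
  proof (cases "card F = 0")
    case True then show ?thesis using nonneg unfolding q_def by simp
  next
    case False
    then obtain S where S: "S \<in> F" by fastforce
    have c: "(card F - 1) * ((q ^ k - 1) * q ^ k) \<le> L * (q ^ n - q ^ k)"
      using main_count[OF aad fin S] unfolding q_def by simp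
    have "q ^ k \<le> q ^ n" using q2 nk by (intro power_increasing) auto
    have "1 \<le> q ^ k" using q2 by simp
    have eqn: "real q ^ n = real q ^ k * real q ^ (n - k)"
      using nk by (simp add: power_add[symmetric])
    have "real ((card F - 1) * ((q ^ k - 1) * q ^ k)) \<le> real (L * (q ^ n - q ^ k))"
      using c by linarith
    then have "(real (card F) - 1) * ((real q ^ k - 1) * real q ^ k) \<le> real L * (real q ^ n - real q ^ k)"
      using False \<open>q ^ k \<le> q ^ n\<close> \<open>1 \<le> q ^ k\<close>
      by (simp add: of_nat_diff)
    also have "\<dots> = (real L * (real q ^ (n - k) - 1)) * real q ^ k"
      unfolding eqn by (simp add: algebra_simps)
    finally have h: "((real (card F) - 1) * (real q ^ k - 1)) * real q ^ k \<le> (real L * (real q ^ (n - k) - 1)) * real q ^ k"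
      by (simp add: mult.assoc)
    have "(real (card F) - 1) * (real q ^ k - 1) \<le> real L * (real q ^ (n - k) - 1)"
      using mult_right_le_imp_le[OF h] q2 by simp
    then have "real (card F) - 1 \<le> real L * (real q ^ (n - k) - 1) / (real q ^ k - 1)"
      using qk by (simp add: pos_le_divide_eq)
    then show ?thesis unfolding q_def by simp
  qed
qed


lemma B_le:
  fixes q :: nat
  assumes q2: "2 \<le> q" and k: "0 < k" and nk: "2 * k < n"
  shows "1 + real L * (real q ^ (n - k) - 1) / (real q ^ k - 1) \<le> (1 + 2 * real L) * real q ^ (n - 2 * k)"
proof -
  have nqk: "2 \<le> q ^ k" using power_increasing[of 1 k q] q2 k by simp
  have qk: "(2::real) \<le> real q ^ k"
    using nqk by (metis of_nat_le_iff of_nat_numeral of_nat_power)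
  have p1: "(1::real) \<le> real q ^ (n - 2 * k)" using q2 by simp
  have eqn: "real q ^ (n - k) = real q ^ k * real q ^ (n - 2 * k)"
    using nk by (simp add: power_add[symmetric])
  have "real L * (real q ^ (n - k) - 1) \<le> real L * (real q ^ k * real q ^ (n - 2 * k))"
    unfolding eqn by (intro mult_left_mono) auto
  also have "\<dots> \<le> real L * (2 * (real q ^ k - 1) * real q ^ (n - 2 * k))"
    using qk p1 by (intro mult_left_mono mult_right_mono) auto
  finally have "real L * (real q ^ (n - k) - 1) / (real q ^ k - 1) \<le> 2 * real L * real q ^ (n - 2 * k)"
    using qk by (simp add: divide_le_eq algebra_simps)
  then show ?thesis using p1 by (simp add: algebra_simps)
qed

lemma mAAD_bound:
  assumes q2: "2 \<le> q" and k: "0 < k" and nk: "2 * k < n"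
  shows "real (mAAD q n k L) \<le> (1 + 2 * real L) * real q ^ (n - 2 * k)"
proof -
  define M where "M = (1 + 2 * real L) * real q ^ (n - 2 * k)"
  define C where "C = {c. \<exists>(K :: nat ring) \<F>. field K \<and> carrier K = {0..<q} \<and> AAD K n k L \<F> \<and> c = card \<F>}"
  have M0: "0 \<le> M" unfolding M_def by simp
  have cb: "real c \<le> M" if cC: "c \<in> C" for c
  proof -
    obtain K :: "nat ring" and F where K: "field K" "carrier K = {0..<q}" "AAD K n k L F" "c = card F"
      using cC unfolding C_def by blast
    have "real c \<le> 1 + real L * (real (card (carrier K)) ^ (n - k) - 1) / (real (card (carrier K)) ^ k - 1)"
      using bound1[OF K(1) _ K(3) k nk] K by simp
    also have "\<dots> \<le> M" using B_le[OF q2 k nk] K(2) unfolding M_def by simp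
    finally show ?thesis .
  qed
  show ?thesis
  proof (cases "C = {}")
    case True
    then show ?thesis using M0 unfolding mAAD_def C_def[symmetric] M_def by simp
  next
    case False
    have "\<forall>c\<in>C. c \<le> nat \<lceil>M\<rceil>"
    proof
      fix c assume "c \<in> C"
      then have "real c \<le> real (nat \<lceil>M\<rceil>)" using cb[of c] real_nat_ceiling_ge[of M] by linarith
      then show "c \<le> nat \<lceil>M\<rceil>" by (simp only: of_nat_le_iff)
    qed
    then have "bdd_above C" by (auto simp: bdd_above_def)
    then have fin: "finite C" by (simp add: bdd_above_nat)
    have "Sup C \<in> C" using False fin by (simp add: Sup_nat_def)
    then show ?thesis using cb unfolding mAAD_def C_def[symmetric] M_def by simp
  qed
qed


lemma log_bound:
  assumes q2: "2 \<le> q" and k: "0 < k" and nk: "2 * k < n"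
  shows "log (real q) (real (mAAD q n k L)) \<le> (real n - 2 * real k) + ln (1 + 2 * real L) / ln (real q)"
proof -
  have lnq: "0 < ln (real q)" using q2 by simp
  have nonneg: "0 \<le> ln (1 + 2 * real L) / ln (real q)" using lnq by simp
  have nk': "real (n - 2 * k) = real n - 2 * real k" using nk by (simp add: of_nat_diff)
  show ?thesis
  proof (cases "mAAD q n k L = 0")
    case True
    then show ?thesis using nonneg nk by (simp add: log_def)
  next
    case False
    then have pos: "0 < real (mAAD q n k L)" by simp
    have "log (real q) (real (mAAD q n k L)) \<le> log (real q) ((1 + 2 * real L) * real q ^ (n - 2 * k))"
      using mAAD_bound[OF q2 k nk] pos q2 by (subst log_le_cancel_iff) auto
    also have "\<dots> = log (real q) (1 + 2 * real L) + real (n - 2 * k)"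
      using q2 by (simp add: log_mult log_nat_power)
    also have "\<dots> = (real n - 2 * real k) + ln (1 + 2 * real L) / ln (real q)"
      using nk' by (simp add: log_def)
    finally show ?thesis .
  qed
qed

lemma part2:
  assumes k: "0 < k" and nk: "2 * k < n"
  shows "pAAD n k L \<le> ereal (real n - 2 * real k)"
proof -
  define F where "F = inf sequentially (principal {q::nat. primepow q})"
  define g where "g q = ereal ((real n - 2 * real k) + ln (1 + 2 * real L) / ln (real q))" for q :: nat
  have FS: "F \<le> sequentially" unfolding F_def by simp
  have ev: "eventually (\<lambda>q. ereal (log (real q) (real (mAAD q n k L))) \<le> g q) F"
  proof (rule filter_leD[OF FS])
    show "eventually (\<lambda>q. ereal (log (real q) (real (mAAD q n k L))) \<le> g q) sequentially"
      using eventually_ge_at_top[of "2::nat"]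
      by eventually_elim (use log_bound k nk in \<open>simp add: g_def\<close>)
  qed
  have lim0: "(\<lambda>q::nat. (real n - 2 * real k) + ln (1 + 2 * real L) / ln (real q)) \<longlonglongrightarrow> (real n - 2 * real k)"
    by real_asymp
  have lim: "(g \<longlongrightarrow> ereal (real n - 2 * real k)) F"
    unfolding g_def by (rule tendsto_mono[OF FS]) (rule tendsto_ereal[OF lim0])
  have "pAAD n k L \<le> Limsup F g"
    unfolding pAAD_def F_def[symmetric] by (rule Limsup_mono[OF ev])
  also have "Limsup F g \<le> ereal (real n - 2 * real k)"
  proof (cases "F = bot")
    case True then show ?thesis by simp
  next
    case False then show ?thesis using lim_imp_Limsup[OF _ lim] by simp
  qed
  finally show ?thesis .
qed


theorem mainTheorem8:
  fixes L k n :: nat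
  assumes "0 < L" and "0 < k" and "0 < n" and "2 * k < n"
  shows "(\<forall>(R :: 'a ring) \<F>. field R \<and> finite (carrier R) \<and> AAD R n k L \<F> \<longrightarrow>
            real (card \<F>) \<le> 1 + real L * (real (card (carrier R)) ^ (n - k) - 1)
                                          / (real (card (carrier R)) ^ k - 1))
       \<and> pAAD n k L \<le> ereal (real n - 2 * real k)"
  using bound1[OF _ _ _ assms(2,4)] part2[OF assms(2,4)] by blast

end
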